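(* Consider the planted submatrix problem with $\rho\le1/2$. Let $k\ge0$ be an integer, $D=2k+1$, and $f(Y)=\tau_k(Y_{11}/\lambda)$. For any $0<r<1$, if $\lambda\ge\frac{12}{r}\sqrt{\log4+2D\log(9/\rho)}$, then $\mathbb{E}(f(Y)-x)^2\le D^2r^{D-1}$.
   Context: Planted submatrix problem: observe $Y=\lambda vv^\top+W$ ($n\times n$), where $v\in\{0,1\}^n$ has i.i.d. $\mathrm{Bernoulli}(\rho)$ entries, $W$ is symmetric with $W_{ij}=W_{ji}\sim\mathcal{N}(0,1)$ for $i<j$, $W_{ii}\sim\mathcal{N}(0,2)$, the $\{W_{ij}:i\le j\}$ independent and independent of $v$; $\lambda>0$, $\rho\in(0,1)$; target $x=v_1$. $\tau_k(y)=(2k+1)\binom{2k}{k}\int_0^yt^k(1-t)^k\,dt$, a polynomial of degree $2k+1$. Logarithms are natural. *)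

theory Defs
  imports "HOL-Probability.Probability"
begin

text \<open>The polynomial tau_k(y) = (2k+1) binom(2k,k) int_0^y t^k (1-t)^k dt
  (oriented integral, so negative y is handled correctly).\<close>
definition tau :: "nat \<Rightarrow> real \<Rightarrow> real" where
  "tau k y = real (2*k+1) * real ((2*k) choose k) *
     (LBINT t=0..y. t ^ k * (1 - t) ^ k)"

end

theory Submission
  imports Defs
begin


definition pp :: "nat \<Rightarrow> real \<Rightarrow> real" where "pp k t = t^k * (1-t)^k"
definition PP :: "nat \<Rightarrow> real \<Rightarrow> real" where
  "PP k y = (\<Sum>j\<le>k. real (k choose j) * (-1)^j * y^(k+j+1) / real (k+j+1))"

lemma pp_sum: "pp k t = (\<Sum>j\<le>k. real (k choose j) * (-1)^j * t^(k+j))"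
proof -
  have "(1-t)^k = (-t + 1)^k" by simp
  also have "\<dots> = (\<Sum>j\<le>k. real (k choose j) * (-t)^j)"
    by (subst binomial_ring) simp
  finally have "pp k t = t^k * (\<Sum>j\<le>k. real (k choose j) * (-t)^j)" unfolding pp_def by simp
  also have "\<dots> = (\<Sum>j\<le>k. real (k choose j) * (-1)^j * t^(k+j))"
    unfolding sum_distrib_left by (intro sum.cong refl) (unfold power_minus[of t] power_add, simp only: ac_simps)
  finally show ?thesis .
qed

lemma PP_deriv: "(PP k has_real_derivative pp k t) (at t)"
proof -
  have "((\<lambda>y. \<Sum>j\<le>k. real (k choose j) * (-1)^j * y^(k+j+1) / real (k+j+1)) has_real_derivative
     (\<Sum>j\<le>k. real (k choose j) * (-1)^j * (real (k+j+1) * t^(k+j)) / real (k+j+1))) (at t)"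
  proof (intro DERIV_sum DERIV_cdivide DERIV_cmult)
    fix j show "((\<lambda>y. y^(k+j+1)) has_real_derivative real (k+j+1) * t^(k+j)) (at t)"
      using DERIV_pow[of "k+j+1" t] by simp
  qed
  moreover have "(\<Sum>j\<le>k. real (k choose j) * (-1)^j * (real (k+j+1) * t^(k+j)) / real (k+j+1))
     = pp k t" unfolding pp_sum
    by (intro sum.cong) (auto simp del: of_nat_add simp add: field_simps)
  ultimately show ?thesis unfolding PP_def[abs_def] by simp
qed

lemma PP0: "PP k 0 = 0" unfolding PP_def by simp

lemma tau_eq: "tau k y = real (2*k+1) * real ((2*k) choose k) * PP k y"
proof -
  have "(LBINT t=ereal 0..ereal y. t ^ k * (1 - t) ^ k) = PP k y - PP k 0"
    by (rule interval_integral_FTC_finite)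
      (auto intro!: continuous_intros has_field_derivative_at_within PP_deriv[unfolded pp_def]
         simp: has_real_derivative_iff_has_vector_derivative[symmetric])
  thus ?thesis unfolding tau_def PP0 by (simp add: zero_ereal_def)
qed

lemma PP1: "real (2*k+1) * real ((2*k) choose k) * PP k 1 = 1"
proof -
  have b: "((\<lambda>t. t powr real k * (1 - t) powr real k) has_integral Beta (real k+1) (real k+1)) {0..1}"
    using has_integral_Beta_real[of "real k + 1" "real k + 1"] by simp
  hence b2: "((\<lambda>t. t powr real k * (1 - t) powr real k) has_integral Beta (real k+1) (real k+1)) {0<..<1}"
    by (simp add: has_integral_Icc_iff_Ioo)
  have "(pp k has_integral (PP k 1 - PP k 0)) {0..1}"
    by (rule fundamental_theorem_of_calculus)
      (auto intro!: has_field_derivative_at_within PP_deriv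
         simp: has_real_derivative_iff_has_vector_derivative[symmetric])
  hence "(pp k has_integral PP k 1) {0<..<1}" by (simp add: has_integral_Icc_iff_Ioo PP0)
  moreover have "(pp k has_integral Beta (real k+1) (real k+1)) {0<..<1}"
    using b2 by (rule has_integral_eq[rotated]) (auto simp: pp_def powr_realpow)
  ultimately have e: "PP k 1 = Beta (real k+1) (real k+1)" by (rule has_integral_unique)
  have g: "Gamma (real k + 1) = fact k" using Gamma_fact[of k] by (simp add: add.commute)
  have g2: "Gamma (real k + 1 + (real k + 1)) = fact (2*k+1)"
    using Gamma_fact[of "2*k+1"] by (simp add: add.commute add.left_commute)
  have "real ((2*k) choose k) = fact (2*k) / (fact k * fact k)"
    by (subst binomial_fact) (auto simp: mult_2)
  moreover have "Gamma (real k + 1 + (real k + 1)) = real (2*k+1) * fact (2*k)"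
    using g2 by (simp add: fact_Suc)
  ultimately have p: "PP k 1 = fact k * fact k / (real (2*k+1) * fact (2*k))"
    using e g unfolding Beta_def by simp
  have c: "real ((2*k) choose k) = fact (2*k) / (fact k * fact k)"
    by (subst binomial_fact) (auto simp: mult_2)
  define F where "F = (fact (2*k) :: real)"
  define G where "G = (fact k :: real)"
  have "F > 0" "G > 0" unfolding F_def G_def by auto
  then show ?thesis unfolding p c F_def[symmetric] G_def[symmetric]
    by (simp del: of_nat_add of_nat_mult)
qed


lemma PP_diff_bound:
  assumes "\<And>z. min a b \<le> z \<Longrightarrow> z \<le> max a b \<Longrightarrow> \<bar>pp k z\<bar> \<le> Bd"
  shows "\<bar>PP k b - PP k a\<bar> \<le> \<bar>b - a\<bar> * Bd"
proof (cases a b rule: linorder_cases)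
  case less
  then obtain z where z: "a < z" "z < b" "PP k b - PP k a = (b - a) * pp k z"
    using MVT2[of a b "PP k" "pp k"] PP_deriv by blast
  have "\<bar>pp k z\<bar> \<le> Bd" using assms z less by auto
  thus ?thesis using z less by (simp add: abs_mult mult_left_mono)
next
  case equal
  have "0 \<le> \<bar>pp k a\<bar>" by simp
  thus ?thesis using equal by simp
next
  case greater
  then obtain z where z: "b < z" "z < a" "PP k a - PP k b = (a - b) * pp k z"
    using MVT2[of b a "PP k" "pp k"] PP_deriv by blast
  have "\<bar>pp k z\<bar> \<le> Bd" using assms z greater by auto
  thus ?thesis using z greater by (simp add: abs_mult mult_left_mono abs_minus_commute)
qed

lemma pp_bound:
  assumes x: "x = 0 \<or> x = 1" and z: "\<bar>z - x\<bar> \<le> \<bar>e\<bar>"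
  shows "\<bar>pp k z\<bar> \<le> \<bar>e\<bar>^k * (1 + \<bar>e\<bar>)^k"
proof -
  have "\<bar>pp k z\<bar> = (\<bar>z\<bar> * \<bar>1 - z\<bar>)^k" unfolding pp_def by (simp add: abs_mult power_abs power_mult_distrib)
  also have "\<bar>z\<bar> * \<bar>1 - z\<bar> \<le> \<bar>e\<bar> * (1 + \<bar>e\<bar>)"
  proof (cases "x = 0")
    case True
    hence "\<bar>z\<bar> \<le> \<bar>e\<bar>" "\<bar>1 - z\<bar> \<le> 1 + \<bar>e\<bar>" using z by auto
    thus ?thesis by (intro mult_mono) auto
  next
    case False
    hence "x = 1" using x by auto
    hence "\<bar>z\<bar> \<le> 1 + \<bar>e\<bar>" "\<bar>1 - z\<bar> \<le> \<bar>e\<bar>" using z by auto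
    thus ?thesis by (subst mult.commute, intro mult_mono) auto
  qed
  hence "(\<bar>z\<bar> * \<bar>1 - z\<bar>)^k \<le> (\<bar>e\<bar> * (1 + \<bar>e\<bar>))^k" by (intro power_mono) auto
  finally show ?thesis by (simp add: power_mult_distrib)
qed

lemma tau_bound:
  assumes x: "x = 0 \<or> x = 1"
  shows "(tau k (x + e) - x)^2 \<le> real (2*k+1)^2 * 64^k * (e^(2*(k+1)) + e^(2*(2*k+1)))"
proof -
  define D where "D = real (2*k+1)"
  define C where "C = real ((2*k) choose k)"
  define A where "A = \<bar>e\<bar>"
  have A0: "A \<ge> 0" unfolding A_def by simp
  have D0: "D \<ge> 0" "C \<ge> 0" unfolding D_def C_def by auto
  have "tau k (x + e) - x = D * C * (PP k (x + e) - PP k x)"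
    using x PP1[of k] unfolding tau_eq D_def C_def by (auto simp: PP0 algebra_simps)
  hence "\<bar>tau k (x + e) - x\<bar> = D * C * \<bar>PP k (x + e) - PP k x\<bar>"
    using D0 by (simp add: abs_mult)
  also have "\<bar>PP k (x + e) - PP k x\<bar> \<le> A * (A^k * (1 + A)^k)"
    unfolding A_def
    by (rule PP_diff_bound[of x "x+e", simplified]) (rule pp_bound[OF x], auto)
  hence "D * C * \<bar>PP k (x + e) - PP k x\<bar> \<le> D * C * (A * (A^k * (1 + A)^k))"
    using D0 by (intro mult_left_mono) auto
  finally have h1: "\<bar>tau k (x + e) - x\<bar> \<le> D * C * (A * (A^k * (1 + A)^k))" .
  have "(tau k (x + e) - x)^2 = \<bar>tau k (x + e) - x\<bar>^2" by simp
  also have "\<dots> \<le> (D * C * (A * (A^k * (1 + A)^k)))^2"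
    using h1 by (intro power_mono) auto
  also have "\<dots> = D^2 * C^2 * ((A^2)^(k+1) * ((1+A)^2)^k)"
    by (simp add: power_mult_distrib power_add power_mult[symmetric] mult_ac)
  also have "\<dots> \<le> D^2 * 16^k * ((A^2)^(k+1) * (4^k * (1 + (A^2)^k)))"
  proof -
    have "real ((2*k) choose k) \<le> real (2^(2*k))"
      using binomial_le_pow2[of "2*k" k] by (simp only: of_nat_le_iff)
    also have "real (2^(2*k)) = (4::real)^k" by (simp add: power_mult)
    finally have c1: "C \<le> 4^k" unfolding C_def .
    have "C * C \<le> 4^k * 4^k" using c1 D0 by (intro mult_mono) auto
    also have "(4::real)^k * 4^k = 16^k" by (simp add: power_mult_distrib[symmetric])
    finally have c2: "C^2 \<le> 16^k" by (simp add: power2_eq_square)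
    have "(1 + A)^2 \<le> 4 * max 1 (A^2)"
    proof (cases "A \<le> 1")
      case True
      hence "(1+A)^2 \<le> 2^2" using A0 by (intro power_mono) auto
      moreover have "(4::real) \<le> 4 * max 1 (A^2)" by simp
      ultimately show ?thesis by simp
    next
      case False
      hence "(1+A)^2 \<le> (2*A)^2" using A0 by (intro power_mono) auto
      moreover have "(2*A)^2 \<le> 4 * max 1 (A^2)" by (simp add: power_mult_distrib le_max_iff_disj)
      ultimately show ?thesis by linarith
    qed
    hence "((1+A)^2)^k \<le> (4 * max 1 (A^2))^k" by (intro power_mono) auto
    also have "\<dots> = 4^k * (max 1 (A^2))^k" by (simp add: power_mult_distrib)
    also have "(max 1 (A^2))^k \<le> 1 + (A^2)^k"
      by (cases "A^2 \<le> 1") (auto simp: max_def)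
    hence "4^k * (max 1 (A^2))^k \<le> 4^k * (1 + (A^2)^k)" by (intro mult_left_mono) auto
    finally have "((1+A)^2)^k \<le> 4^k * (1 + (A^2)^k)" .
    hence hX: "(A^2)^(k+1) * ((1+A)^2)^k \<le> (A^2)^(k+1) * (4^k * (1 + (A^2)^k))"
      by (intro mult_left_mono) auto
    have hC: "D^2 * C^2 \<le> D^2 * 16^k" using c2 by (intro mult_left_mono) auto
    show ?thesis by (rule mult_mono[OF hC hX]) auto
  qed
  also have "\<dots> = D^2 * (16^k * 4^k) * ((e^2)^(k+1) + (e^2)^(k+1) * (e^2)^k)"
  proof -
    have a2: "A^2 = e^2" unfolding A_def by simp
    show ?thesis unfolding a2 by (simp only: distrib_left distrib_right mult_1_right ac_simps)
  qed
  also have "\<dots> = D^2 * 64^k * (e^(2*(k+1)) + e^(2*(2*k+1)))"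
  proof -
    have h64: "16^k * 4^k = (64::real)^k" by (simp add: power_mult_distrib[symmetric])
    have hp: "(e^2)^(k+1) * (e^2)^k = (e^2)^(2*k+1)"
      unfolding power_add[symmetric] by (simp add: mult_2)
    show ?thesis unfolding h64 hp power_mult ..
  qed
  finally show ?thesis unfolding D_def .
qed


lemma fact_ratio_le: "(fact (2*m) :: real) / fact m \<le> real (2*m) ^ m"
proof -
  have d: "fact m dvd (fact (2*m) :: nat)" by (intro fact_dvd) auto
  then obtain q where q: "(fact (2*m)::nat) = fact m * q" by (auto elim: dvdE)
  have "q = fact (2*m) div fact m" using q by simp
  also have "\<dots> \<le> (2*m)^m" using fact_div_fact_le_pow[of m "2*m"] by simp
  finally have "real q \<le> real (2*m) ^ m" by (metis of_nat_le_iff of_nat_power)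
  moreover have "(fact (2*m) :: real) = fact m * real q"
    using arg_cong[OF q, of real] by simp
  ultimately show ?thesis by simp
qed

lemma lam_sq:
  fixes lam \<rho> r :: real
  assumes "0 < \<rho>" "\<rho> \<le> 1/2" "0 < r"
    and lam: "lam \<ge> 12 / r * sqrt (ln 4 + 2 * real (2*k+1) * ln (9 / \<rho>))"
  shows "lam^2 \<ge> 576 * real (2*k+1) / r^2"
proof -
  have "exp (2::real) = exp 1 ^ 2" using exp_double[of "1::real"] by simp
  also have "\<dots> \<le> 3^2" using exp_le by (intro power_mono) auto
  also have "\<dots> \<le> 9 / \<rho>" using assms by (simp add: field_simps)
  finally have "ln (exp 2) \<le> ln (9/\<rho>)" using assms by (subst ln_le_cancel_iff) auto
  hence l: "ln (9/\<rho>) \<ge> 2" by simp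
  have "ln 4 \<ge> (0::real)" by simp
  moreover have "2 * real (2*k+1) * 2 \<le> 2 * real (2*k+1) * ln (9 / \<rho>)" using l
    by (intro mult_left_mono) auto
  ultimately have "4 * real (2*k+1) \<le> ln 4 + 2 * real (2*k+1) * ln (9 / \<rho>)" by linarith
  hence "sqrt (4 * real (2*k+1)) \<le> sqrt (ln 4 + 2 * real (2*k+1) * ln (9 / \<rho>))"
    by (rule real_sqrt_le_mono)
  hence "12 / r * sqrt (4 * real (2*k+1)) \<le> 12 / r * sqrt (ln 4 + 2 * real (2*k+1) * ln (9 / \<rho>))"
    using assms by (intro mult_left_mono) auto
  hence "12 / r * sqrt (4 * real (2*k+1)) \<le> lam" using lam by linarith
  moreover have "12 / r * sqrt (4 * real (2*k+1)) \<ge> 0" using assms by simp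
  ultimately have "(12 / r * sqrt (4 * real (2*k+1)))^2 \<le> lam^2" by (intro power_mono)
  thus ?thesis by (simp add: power_mult_distrib power_divide)
qed

lemma numeric:
  fixes lam r :: real
  assumes "0 < r" "r < 1" "lam > 0" "lam^2 \<ge> 576 * real (2*k+1) / r^2"
  shows "64^k * (fact (2*(k+1)) / fact (k+1) / lam^(2*(k+1)) + fact (2*(2*k+1)) / fact (2*k+1) / lam^(2*(2*k+1)))
         \<le> r^(2*k)"
proof -
  define s where "s = r^2/288"
  have s0: "0 \<le> s" "s \<le> 1" unfolding s_def using assms power_le_one[of r 2] by auto
  have key: "fact (2*m) / fact m / lam^(2*m) \<le> s^m" if m: "m \<le> 2*k+1" for m
  proof -
    have "fact (2*m) / fact m / lam^(2*m) \<le> real (2*m) ^ m / lam^(2*m)"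
      using fact_ratio_le[of m] assms by (intro divide_right_mono) auto
    also have "\<dots> = (real (2*m) / lam^2)^m" by (simp add: power_divide power_mult)
    also have "\<dots> \<le> s^m"
    proof (intro power_mono)
      have "real (2*m) \<le> 2 * real (2*k+1)" using m by simp
      also have "\<dots> = s * (576 * real (2*k+1) / r^2)" unfolding s_def using assms by (simp add: field_simps)
      also have "\<dots> \<le> s * lam^2" using assms s0 by (intro mult_left_mono) auto
      finally show "real (2*m) / lam^2 \<le> s" using assms by (simp add: divide_simps)
    qed (use assms in auto)
    finally show ?thesis .
  qed
  have "s^(2*k+1) \<le> s^(k+1)" using s0 by (intro power_decreasing) auto
  hence "fact (2*(k+1)) / fact (k+1) / lam^(2*(k+1)) + fact (2*(2*k+1)) / fact (2*k+1) / lam^(2*(2*k+1))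
       \<le> 2 * s^(k+1)" using key[of "k+1"] key[of "2*k+1"] by simp
  hence "64^k * (fact (2*(k+1)) / fact (k+1) / lam^(2*(k+1)) + fact (2*(2*k+1)) / fact (2*k+1) / lam^(2*(2*k+1)))
       \<le> 64^k * (2 * s^(k+1))" by (intro mult_left_mono) auto
  also have "\<dots> = (2 * 64^k / 288^(k+1)) * (r^(2*k) * r^2)"
    unfolding s_def by (simp add: power_divide power_mult[symmetric] power_add mult_ac)
  also have "\<dots> \<le> 1 * (r^(2*k) * 1)"
  proof -
    have "(64::real)^k \<le> 288^k" by (intro power_mono) auto
    moreover have "(0::real) \<le> 288^k" by simp
    moreover have "(288::real)^(k+1) = 288 * 288^k" by simp
    ultimately have "2 * 64^k \<le> (288::real)^(k+1)" by linarith
    hence a: "2 * 64^k / 288^(k+1) \<le> (1::real)" by simp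
    have b: "r^(2*k) * r^2 \<le> r^(2*k) * 1" using assms by (intro mult_left_mono) (auto simp: power_le_one)
    show ?thesis using a b assms by (intro mult_mono) auto
  qed
  finally show ?thesis by simp
qed


theorem mainTheorem11:
  fixes M :: "'a measure"
    and n :: nat and lam \<rho> r :: real and k :: nat
    and v :: "nat \<Rightarrow> 'a \<Rightarrow> real"
    and W :: "nat \<Rightarrow> nat \<Rightarrow> 'a \<Rightarrow> real"
  assumes "prob_space M"
    and "n \<ge> 1"
    and "lam > 0" and "0 < \<rho>" and "\<rho> \<le> 1/2"
    and v_rv: "\<And>i. i < n \<Longrightarrow> v i \<in> borel_measurable M"
    and v_distr: "\<And>i. i < n \<Longrightarrow>
        distr M borel (v i) = distr (measure_pmf (bernoulli_pmf \<rho>)) borel (\<lambda>b. of_bool b)"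
    and W_sym: "\<And>i j. i < n \<Longrightarrow> j < n \<Longrightarrow> W j i = W i j"
    and W_off: "\<And>i j. i < j \<Longrightarrow> j < n \<Longrightarrow>
        distributed M lborel (W i j) (normal_density 0 1)"
    and W_diag: "\<And>i. i < n \<Longrightarrow>
        distributed M lborel (W i i) (normal_density 0 (sqrt 2))"
    and indep: "prob_space.indep_vars M (\<lambda>_. borel)
        (\<lambda>s. case s of Inl i \<Rightarrow> v i | Inr (i, j) \<Rightarrow> W i j)
        (Inl ` {..<n} \<union> Inr ` {(i, j). i \<le> j \<and> j < n})"
    and "0 < r" and "r < 1"
    and lam: "lam \<ge> 12 / r * sqrt (ln 4 + 2 * real (2*k+1) * ln (9 / \<rho>))"
  shows "prob_space.expectation M
           (\<lambda>\<omega>. (tau k ((lam * v 0 \<omega> * v 0 \<omega> + W 0 0 \<omega>) / lam) - v 0 \<omega>)\<^sup>2)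
         \<le> real (2*k+1) ^ 2 * r ^ (2*k)"
proof -
  interpret P: prob_space M by fact
  define D where "D = real (2*k+1)"
  define K where "K = D^2 * 64^k"
  define Bf where "Bf = (\<lambda>w::real. K * ((w/lam)^(2*(k+1)) + (w/lam)^(2*(2*k+1))))"
  define c1 where "c1 = K / lam^(2*(k+1))"
  define c2 where "c2 = K / lam^(2*(2*k+1))"
  define V1 where "V1 = (fact (2*(k+1)) / ((2 / (sqrt 2)\<^sup>2)^(k+1) * fact (k+1)) :: real)"
  define V2 where "V2 = (fact (2*(2*k+1)) / ((2 / (sqrt 2)\<^sup>2)^(2*k+1) * fact (2*k+1)) :: real)"
  have lam0: "lam > 0" by fact
  have n0: "0 < n" using assms(2) by simp
  have Wd: "distributed M lborel (W 0 0) (normal_density 0 (sqrt 2))" using W_diag[OF n0] .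
  have m1: "has_bochner_integral lborel (\<lambda>x. normal_density 0 (sqrt 2) x * (x - 0)^(2*(k+1))) V1"
    unfolding V1_def by (rule normal_moment_even) simp
  have m2: "has_bochner_integral lborel (\<lambda>x. normal_density 0 (sqrt 2) x * (x - 0)^(2*(2*k+1))) V2"
    unfolding V2_def by (rule normal_moment_even) simp
  have "has_bochner_integral lborel (\<lambda>x. c1 * (normal_density 0 (sqrt 2) x * (x - 0)^(2*(k+1)))
      + c2 * (normal_density 0 (sqrt 2) x * (x - 0)^(2*(2*k+1)))) (c1 * V1 + c2 * V2)"
    using m1 m2 by (intro has_bochner_integral_add has_bochner_integral_mult_right) auto
  also have "(\<lambda>x. c1 * (normal_density 0 (sqrt 2) x * (x - 0)^(2*(k+1)))
      + c2 * (normal_density 0 (sqrt 2) x * (x - 0)^(2*(2*k+1)))) = (\<lambda>x. normal_density 0 (sqrt 2) x * Bf x)"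
    unfolding Bf_def c1_def c2_def by (auto simp: fun_eq_iff power_divide field_simps)
  finally have hb: "has_bochner_integral lborel (\<lambda>x. normal_density 0 (sqrt 2) x * Bf x) (c1 * V1 + c2 * V2)" .
  have Bfm: "Bf \<in> borel_measurable lborel" unfolding Bf_def by simp
  have intB: "integrable M (\<lambda>\<omega>. Bf (W 0 0 \<omega>))"
    using distributed_integrable[OF Wd Bfm] hb by (auto simp: has_bochner_integral_iff)
  have "integral\<^sup>L M (\<lambda>\<omega>. Bf (W 0 0 \<omega>)) = (\<integral>x. normal_density 0 (sqrt 2) x * Bf x \<partial>lborel)"
    using distributed_integral[OF Wd Bfm] by simp
  also have "\<dots> = c1 * V1 + c2 * V2" using hb by (simp add: has_bochner_integral_iff)
  also have "\<dots> = D^2 * (64^k * (fact (2*(k+1)) / fact (k+1) / lam^(2*(k+1)) + fact (2*(2*k+1)) / fact (2*k+1) / lam^(2*(2*k+1))))"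
    unfolding c1_def c2_def V1_def V2_def K_def by (simp add: field_simps)
  also have "\<dots> \<le> D^2 * r^(2*k)"
    using numeric[where r=r and lam=lam and k=k] lam_sq[where \<rho>=\<rho> and r=r and lam=lam and k=k] assms by (intro mult_left_mono) auto
  finally have EB: "integral\<^sup>L M (\<lambda>\<omega>. Bf (W 0 0 \<omega>)) \<le> D^2 * r^(2*k)" .
  have "AE x in distr M borel (v 0). x = 0 \<or> x = 1"
    unfolding v_distr[OF n0] by (subst AE_distr_iff) auto
  hence AEv: "AE \<omega> in M. v 0 \<omega> = 0 \<or> v 0 \<omega> = 1"
    by (subst (asm) AE_distr_iff) (auto simp: v_rv[OF n0])
  have AEb: "AE \<omega> in M. (tau k ((lam * v 0 \<omega> * v 0 \<omega> + W 0 0 \<omega>) / lam) - v 0 \<omega>)\<^sup>2 \<le> Bf (W 0 0 \<omega>)"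
    using AEv
  proof eventually_elim
    case (elim \<omega>)
    have e: "(lam * v 0 \<omega> * v 0 \<omega> + W 0 0 \<omega>) / lam = v 0 \<omega> + W 0 0 \<omega> / lam"
      using elim lam0 by (auto simp: field_simps)
    show ?case unfolding e Bf_def K_def D_def
      using tau_bound[OF elim, of k "W 0 0 \<omega> / lam"] by simp
  qed
  show ?thesis
  proof (cases "integrable M (\<lambda>\<omega>. (tau k ((lam * v 0 \<omega> * v 0 \<omega> + W 0 0 \<omega>) / lam) - v 0 \<omega>)\<^sup>2)")
    case True
    have "integral\<^sup>L M (\<lambda>\<omega>. (tau k ((lam * v 0 \<omega> * v 0 \<omega> + W 0 0 \<omega>) / lam) - v 0 \<omega>)\<^sup>2)
        \<le> integral\<^sup>L M (\<lambda>\<omega>. Bf (W 0 0 \<omega>))"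
      by (rule integral_mono_AE[OF True intB AEb])
    thus ?thesis using EB unfolding D_def by simp
  next
    case False
    thus ?thesis by (simp add: not_integrable_integral_eq)
  qed
qed

end
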